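(* Let $X$ be a one-good random valuation whose values are bounded from below by some $x_0\ge0$ (i.e., $X\ge x_0$ almost surely). Let $\lambda$ be a real number and let $\mu=(q,s)$ be an IC one-good mechanism with $q(x)\le\lambda$ for all $x\ge x_0$. Then \[ R(\mu;X)\le(\lambda-q(x_0))\,\textsc{Rev}(X)+s(x_0). \]
   Context: A one-good random valuation is a nonnegative real random variable. A one-good mechanism is a pair $\mu=(q,s)$ of Borel functions $q:\mathbb{R}_+\to[0,1]$, $s:\mathbb{R}_+\to\mathbb{R}$, with buyer payoff $b(x)=q(x)x-s(x)$; it is IC if $b(x)\ge q(\tilde x)x-s(\tilde x)$ for all $x,\tilde x\ge0$, and IR if $b(x)\ge0$ for all $x$. $R(\mu;X)=\mathbb{E}[s(X)]$, and $\textsc{Rev}(X)$ is the supremum of $R(\mu;X)$ over all IC and IR mechanisms (equivalently $\sup_{p\ge0}p\,\mathbb{P}[X\ge p]$). *)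

theory Defs
  imports "HOL-Probability.Probability"
begin

definition random_valuation :: "'a measure \<Rightarrow> ('a \<Rightarrow> real) \<Rightarrow> bool" where
  "random_valuation M X \<longleftrightarrow> prob_space M \<and> X \<in> borel_measurable M \<and> (\<forall>\<omega>\<in>space M. X \<omega> \<ge> 0)"

text \<open>A one-good mechanism (q,s): Borel functions on R+ with q valued in [0,1].
  Functions are total on real; only their values on R+ matter.\<close>
definition one_good_mechanism :: "(real \<Rightarrow> real) \<Rightarrow> (real \<Rightarrow> real) \<Rightarrow> bool" where
  "one_good_mechanism q s \<longleftrightarrow>
     q \<in> borel_measurable (restrict_space borel {0..}) \<and>
     s \<in> borel_measurable (restrict_space borel {0..}) \<and>
     (\<forall>x\<ge>0. 0 \<le> q x \<and> q x \<le> 1)"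

definition buyer_payoff :: "(real \<Rightarrow> real) \<Rightarrow> (real \<Rightarrow> real) \<Rightarrow> real \<Rightarrow> real" where
  "buyer_payoff q s x = q x * x - s x"

definition IC :: "(real \<Rightarrow> real) \<Rightarrow> (real \<Rightarrow> real) \<Rightarrow> bool" where
  "IC q s \<longleftrightarrow> (\<forall>x\<ge>0. \<forall>y\<ge>0. buyer_payoff q s x \<ge> q y * x - s y)"

definition IR :: "(real \<Rightarrow> real) \<Rightarrow> (real \<Rightarrow> real) \<Rightarrow> bool" where
  "IR q s \<longleftrightarrow> (\<forall>x\<ge>0. buyer_payoff q s x \<ge> 0)"

definition ext_expectation :: "'a measure \<Rightarrow> ('a \<Rightarrow> real) \<Rightarrow> ereal" where
  "ext_expectation M f =
     enn2ereal (\<integral>\<^sup>+ \<omega>. ennreal (f \<omega>) \<partial>M) - enn2ereal (\<integral>\<^sup>+ \<omega>. ennreal (- f \<omega>) \<partial>M)"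

definition revenue :: "'a measure \<Rightarrow> ('a \<Rightarrow> real) \<Rightarrow> (real \<Rightarrow> real) \<Rightarrow> (real \<Rightarrow> real) \<Rightarrow> ereal" where
  "revenue M X q s = ext_expectation M (\<lambda>\<omega>. s (X \<omega>))"

definition Rev :: "'a measure \<Rightarrow> ('a \<Rightarrow> real) \<Rightarrow> ereal" where
  "Rev M X = Sup {revenue M X q s | q s. one_good_mechanism q s \<and> IC q s \<and> IR q s}"

end

theory Submission
  imports Defs
begin

lemma ennreal_ident:
  fixes f a :: real assumes "a \<le> f"
  shows "ennreal f + ennreal (-a) = ennreal (f - a) + ennreal a + ennreal (-f)"
proof (cases "f \<ge> 0")
  case True
  then show ?thesis
  proof (cases "a \<ge> 0")
    case True
    with \<open>f\<ge>0\<close> assms show ?thesis by (simp add: ennreal_plus[symmetric] ennreal_neg)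
  next
    case False
    with \<open>f\<ge>0\<close> assms show ?thesis by (simp add: ennreal_plus[symmetric] ennreal_neg)
  qed
next
  case False
  with assms show ?thesis by (simp add: ennreal_plus[symmetric] ennreal_neg)
qed

lemma extexp_shift:
  assumes P: "prob_space M" and f: "f \<in> borel_measurable M" and ae: "AE \<omega> in M. a \<le> f \<omega>"
  shows "ext_expectation M f = enn2ereal (\<integral>\<^sup>+ \<omega>. ennreal (f \<omega> - a) \<partial>M) + ereal a"
proof -
  interpret prob_space M by fact
  define Pp where "Pp = (\<integral>\<^sup>+ \<omega>. ennreal (f \<omega>) \<partial>M)"
  define N where "N = (\<integral>\<^sup>+ \<omega>. ennreal (- f \<omega>) \<partial>M)"
  define H where "H = (\<integral>\<^sup>+ \<omega>. ennreal (f \<omega> - a) \<partial>M)"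
  have "(\<integral>\<^sup>+ \<omega>. ennreal (f \<omega>) + ennreal (-a) \<partial>M) =
        (\<integral>\<^sup>+ \<omega>. ennreal (f \<omega> - a) + ennreal a + ennreal (- f \<omega>) \<partial>M)"
    by (rule nn_integral_cong_AE) (use ae ennreal_ident in auto)
  hence eq: "Pp + ennreal (-a) = H + ennreal a + N"
    unfolding Pp_def N_def H_def using f
    by (simp add: nn_integral_add emeasure_space_1)
  have "N \<le> (\<integral>\<^sup>+ \<omega>. ennreal (-a) \<partial>M)"
    unfolding N_def by (rule nn_integral_mono_AE) (use ae in \<open>eventually_elim, auto intro: ennreal_leI\<close>)
  hence Nfin: "N < top" by (simp add: emeasure_space_1 le_less_trans)
  show ?thesis
  proof (cases "H = top")
    case True
    with eq have "Pp = top" by (simp add: ennreal_add_eq_top)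
    with True Nfin show ?thesis unfolding ext_expectation_def Pp_def[symmetric] N_def[symmetric] H_def[symmetric]
      by (cases N) auto
  next
    case False
    then obtain h where h: "H = ennreal h" "h \<ge> 0" by (cases H) auto
    from Nfin obtain n where n: "N = ennreal n" "n \<ge> 0" by (cases N) auto
    from eq h n have "Pp < top" by (metis ennreal_add_eq_top ennreal_neq_top top.not_eq_extremum)
    then obtain p where p: "Pp = ennreal p" "p \<ge> 0" by (cases Pp) auto
    from eq h n p have "p + max 0 (-a) = h + max 0 a + n"
    proof (cases "a \<ge> 0")
      case True
      with eq h n p have "ennreal p = ennreal (h + a + n)"
        by (simp add: ennreal_neg ennreal_plus)
      with True h n p show ?thesis by (simp del: ennreal_plus add: ennreal_inj)
    next
      case False
      with eq h n p have "ennreal (p - a) = ennreal (h + n)"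
        by (simp add: ennreal_neg ennreal_plus[symmetric] del: ennreal_plus)
      with False h n p show ?thesis by (simp del: ennreal_plus add: ennreal_inj)
    qed
    then show ?thesis unfolding ext_expectation_def Pp_def[symmetric] N_def[symmetric] H_def[symmetric]
      using h n p by auto
  qed
qed


lemma IC_mono:
  assumes "IC q s" "0 \<le> y" "y \<le> x"
  shows "q y \<le> q x"
proof -
  from assms have 1: "q x * x - s x \<ge> q y * x - s y" and 2: "q y * y - s y \<ge> q x * y - s x"
    unfolding IC_def buyer_payoff_def by auto
  hence "(q x - q y) * (x - y) \<ge> 0" by (simp add: algebra_simps)
  show ?thesis
  proof (cases "x = y")
    case False
    with assms have "x - y > 0" by simp
    with \<open>(q x - q y) * (x - y) \<ge> 0\<close> show ?thesis by (simp add: zero_le_mult_iff)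
  qed simp
qed

lemma s_ge:
  assumes "IC q s" "0 \<le> x0" "x0 \<le> x"
  shows "s x0 \<le> s x"
proof -
  from assms have "q x0 * x0 - s x0 \<ge> q x * x0 - s x"
    unfolding IC_def buyer_payoff_def by auto
  moreover have "q x0 * x0 \<le> q x * x0" using IC_mono[OF assms] assms(2) by (simp add: mult_right_mono)
  ultimately show ?thesis by linarith
qed

lemma meas_restr:
  fixes f :: "real \<Rightarrow> real"
  assumes "f \<in> borel_measurable (restrict_space borel {0..})"
  shows "(\<lambda>x::real. if x0 \<le> x then (f x - f x0) / c else 0) \<in> borel_measurable (restrict_space borel {0..})"
proof (rule measurable_If)
  show "(\<lambda>x. (f x - f x0) / c) \<in> borel_measurable (restrict_space borel {0..})"
    by (rule borel_measurable_divide[OF borel_measurable_diff[OF assms borel_measurable_const] borel_measurable_const])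
  show "(\<lambda>x. 0) \<in> borel_measurable (restrict_space borel {0..})" by simp
  have "{x \<in> space (restrict_space borel {0..}). x0 \<le> x} = {0::real..} \<inter> {x0..}" by auto
  then show "{x \<in> space (restrict_space borel {0..}). x0 \<le> x} \<in> sets (restrict_space borel {0..})"
    unfolding sets_restrict_space by auto
qed

theorem lemma2:
  fixes M :: "'a measure" and X :: "'a \<Rightarrow> real"
    and x0 lam :: real and q s :: "real \<Rightarrow> real"
  assumes "random_valuation M X"
    and "x0 \<ge> 0"
    and "AE \<omega> in M. X \<omega> \<ge> x0"
    and "one_good_mechanism q s"
    and "IC q s"
    and "\<forall>x\<ge>x0. q x \<le> lam"
  shows "revenue M X q s \<le> ereal (lam - q x0) * Rev M X + ereal (s x0)"
proof -
  note rv = assms(1)[unfolded random_valuation_def]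
  interpret prob_space M using rv by simp
  note mech = assms(4)[unfolded one_good_mechanism_def]
  have Xr: "X \<in> measurable M (restrict_space borel {0..})"
    using rv by (intro measurable_restrict_space2) auto
  have sX: "(\<lambda>\<omega>. s (X \<omega>)) \<in> borel_measurable M"
    using measurable_comp[OF Xr, of s borel] mech by (simp add: comp_def)
  have ae1: "AE \<omega> in M. s x0 \<le> s (X \<omega>)"
    using assms(3) by eventually_elim (use s_ge[OF assms(5) assms(2)] in auto)
  define H where "H = (\<integral>\<^sup>+ \<omega>. ennreal (s (X \<omega>) - s x0) \<partial>M)"
  have rev: "revenue M X q s = enn2ereal H + ereal (s x0)"
    unfolding revenue_def H_def by (rule extexp_shift[OF _ sX ae1]) (use rv in simp)
  define c where "c = lam - q x0"
  have c0: "c \<ge> 0" using assms(6) unfolding c_def by auto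
  have keyH: "enn2ereal H \<le> ereal c * Rev M X"
  proof (cases "c = 0")
    case True
    have "AE \<omega> in M. s (X \<omega>) = s x0"
      using assms(3)
    proof eventually_elim
      case (elim \<omega>)
      have qe: "q (X \<omega>) = q x0"
        using IC_mono[OF assms(5) assms(2) elim] assms(6) elim True unfolding c_def by force
      from assms(5) elim assms(2) have "q (X \<omega>) * X \<omega> - s (X \<omega>) \<ge> q x0 * X \<omega> - s x0"
        "q x0 * x0 - s x0 \<ge> q (X \<omega>) * x0 - s (X \<omega>)"
        unfolding IC_def buyer_payoff_def by auto
      with qe show ?case by (auto simp: qe)
    qed
    hence "H = 0" unfolding H_def by (subst nn_integral_cong_AE[where v="\<lambda>_. 0"]) auto
    then show ?thesis using True by (simp add: zero_ereal_def[symmetric] zero_ennreal.rep_eq)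
  next
    case False
    with c0 have cpos: "c > 0" by simp
    define q' where "q' = (\<lambda>x::real. if x0 \<le> x then (q x - q x0) / c else 0)"
    define s' where "s' = (\<lambda>x::real. if x0 \<le> x then (s x - s x0) / c else 0)"
    have m': "one_good_mechanism q' s'"
      unfolding one_good_mechanism_def
    proof (intro conjI allI impI)
      show "q' \<in> borel_measurable (restrict_space borel {0..})"
        unfolding q'_def by (rule meas_restr) (use mech in simp)
      show "s' \<in> borel_measurable (restrict_space borel {0..})"
        unfolding s'_def by (rule meas_restr) (use mech in simp)
      fix x :: real assume "0 \<le> x"
      show "0 \<le> q' x" unfolding q'_def using IC_mono[OF assms(5) assms(2), of x] cpos by auto
      show "q' x \<le> 1" unfolding q'_def using assms(6) cpos by (auto simp: c_def divide_le_eq)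
    qed
    have IC': "IC q' s'" and IR': "IR q' s'"
    proof -
      have gen: "q' y * x - s' y \<le> buyer_payoff q' s' x" if "0 \<le> x" "0 \<le> y" for x y
      proof -
        have ic: "\<And>a b. 0 \<le> a \<Longrightarrow> 0 \<le> b \<Longrightarrow> q b * a - s b \<le> q a * a - s a"
          using assms(5) unfolding IC_def buyer_payoff_def by auto
        show ?thesis
        proof (cases "x0 \<le> x")
          case True
          show ?thesis
          proof (cases "x0 \<le> y")
            case True
            with \<open>x0 \<le> x\<close> ic[OF that] show ?thesis
              unfolding buyer_payoff_def q'_def s'_def using cpos
              by (simp add: divide_simps) (simp add: algebra_simps)
          next
            case False
            with \<open>x0 \<le> x\<close> ic[OF that(1) assms(2)] show ?thesis
              unfolding buyer_payoff_def q'_def s'_def using cpos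
              by (simp add: divide_simps) (simp add: algebra_simps)
          qed
        next
          case False
          show ?thesis
          proof (cases "x0 \<le> y")
            case True
            have "(q y - q x0) * x \<le> (q y - q x0) * x0"
              using IC_mono[OF assms(5) assms(2) True] False by (intro mult_left_mono) auto
            with True False ic[OF assms(2) that(2)] show ?thesis
              unfolding buyer_payoff_def q'_def s'_def using cpos
              by (simp add: divide_simps) (simp add: algebra_simps)
          next
            case False
            with \<open>\<not> x0 \<le> x\<close> show ?thesis
              unfolding buyer_payoff_def q'_def s'_def by simp
          qed
        qed
      qed
      show "IC q' s'" unfolding IC_def using gen by auto
      have "0 \<le> buyer_payoff q' s' x" if "0 \<le> x" for x
        using gen[OF that that] gen[OF that assms(2)] that
        by (cases "x0 \<le> x") (auto simp: q'_def s'_def buyer_payoff_def)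
      then show "IR q' s'" unfolding IR_def by auto
    qed
    have s'X: "(\<lambda>\<omega>. s' (X \<omega>)) \<in> borel_measurable M"
      using measurable_comp[OF Xr, of s' borel] m' unfolding one_good_mechanism_def by (simp add: comp_def)
    have s'nn: "0 \<le> s' x" for x
      unfolding s'_def using s_ge[OF assms(5) assms(2), of x] cpos by auto
    have "revenue M X q' s' = enn2ereal (\<integral>\<^sup>+ \<omega>. ennreal (s' (X \<omega>) - 0) \<partial>M) + ereal 0"
      unfolding revenue_def by (rule extexp_shift[OF _ s'X]) (use rv s'nn in simp_all)
    also have "(\<integral>\<^sup>+ \<omega>. ennreal (s' (X \<omega>) - 0) \<partial>M) = (\<integral>\<^sup>+ \<omega>. ennreal (1/c) * ennreal (s (X \<omega>) - s x0) \<partial>M)"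
      using assms(3)
      by (intro nn_integral_cong_AE, eventually_elim) (use cpos in \<open>simp add: s'_def ennreal_mult'[symmetric] del: ennreal_mult\<close>)
    also have "\<dots> = ennreal (1/c) * H"
      unfolding H_def using sX by (simp add: nn_integral_cmult)
    finally have r': "revenue M X q' s' = ereal (1/c) * enn2ereal H"
      using cpos by (simp add: times_ennreal.rep_eq)
    have "revenue M X q' s' \<le> Rev M X"
      unfolding Rev_def using m' IC' IR' by (intro Sup_upper) blast
    hence "ereal c * revenue M X q' s' \<le> ereal c * Rev M X"
      using cpos by (intro ereal_mult_left_mono) auto
    moreover have "ereal c * revenue M X q' s' = enn2ereal H"
      unfolding r' using cpos by (simp add: mult.assoc[symmetric])
    ultimately show ?thesis by simp
  qed
  show ?thesis unfolding rev c_def[symmetric]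
    using keyH by (simp add: add_right_mono)
qed

end
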